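(* $\displaystyle\lim_{N\to\infty,\ N\text{ even}}\frac{m^*_N}{2^{(N-1)/2}}=1.$ In particular, for large even $N$, quantum correlations certifying $N$ bits of device-independent randomness (via the strategies $S_{\theta^*_N}$ and expressions $I_{\theta^*_N}$) achieve MABK values arbitrarily close (in ratio) to the maximal quantum value $2^{(N-1)/2}$.
   Context: For even $N$: $\theta^*_N=2\pi t_N/(N+1)$ with $t_N=N/4+1/2,\ N/4,\ 3N/4+1/2,\ 3N/4+1$ according as $N\equiv2,4,6,0\pmod 8$, and $m^*_N=\langle M_N(\theta^*_N)\rangle$ where $\langle M_N(\theta)\rangle=2^{\frac{N-1}2}\big(\cos^N(\theta/2+\pi/4)\sin(N\theta/2+\pi/4)+\cos^N(\theta/2-\pi/4)\sin(N\theta/2-\pi/4)\big)$ is the MABK value of the strategy $S_\theta$ (state $(|0\rangle^{\otimes N}+i|1\rangle^{\otimes N})/\sqrt2$, $A_0^{(k)}=\sigma_X$, $A^{(k)}_1=\cos\theta\sigma_X+\sin\theta\sigma_Y$). The maximal quantum MABK value is $2^{(N-1)/2}$. *)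

theory Defs
  imports "HOL-Analysis.Analysis"
begin

definition mabk_value :: "nat \<Rightarrow> real \<Rightarrow> real" where
  "mabk_value N \<theta> = 2 powr ((real N - 1) / 2) *
     ((cos (\<theta>/2 + pi/4)) ^ N * sin (real N * \<theta> / 2 + pi/4)
    + (cos (\<theta>/2 - pi/4)) ^ N * sin (real N * \<theta> / 2 - pi/4))"

definition t_opt :: "nat \<Rightarrow> real" where
  "t_opt N =
     (if N mod 8 = 2 then real N / 4 + 1/2
      else if N mod 8 = 4 then real N / 4
      else if N mod 8 = 6 then 3 * real N / 4 + 1/2
      else 3 * real N / 4 + 1)"

definition theta_opt :: "nat \<Rightarrow> real" where
  "theta_opt N = 2 * pi * t_opt N / (real N + 1)"

definition m_opt :: "nat \<Rightarrow> real" where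
  "m_opt N = mabk_value N (theta_opt N)"

end

theory Submission imports Defs "HOL-Real_Asymp.Real_Asymp" begin

lemma sin_kper: "sin (x + real k * (2*pi)) = sin x"
proof (induction k)
  case (Suc k)
  have "x + real (Suc k) * (2*pi) = (x + real k * (2*pi)) + 2*pi" by (simp add: algebra_simps)
  then show ?case using Suc by (metis sin_periodic)
qed simp

lemma gen:
  fixes N ma mb :: nat and d th c1 c2 s1 s2 :: real
  assumes th: "theta_opt N = th"
    and e1: "th/2 + pi/4 = c1" and e2: "th/2 - pi/4 = c2"
    and e3: "real N * th / 2 + pi/4 = s1 + real ma * (2*pi)"
    and e4: "real N * th / 2 - pi/4 = s2 + real mb * (2*pi)"
  shows "m_opt N / 2 powr ((real N - 1)/2) = cos c1 ^ N * sin s1 + cos c2 ^ N * sin s2"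
  unfolding m_opt_def mabk_value_def th e1 e2 e3 e4 sin_kper by simp

lemma case1:
  fixes k :: nat
  defines "N \<equiv> 8*k+2"
  defines "d \<equiv> pi/(4*(real N+1))"
  shows "\<exists>s. \<bar>s\<bar> \<le> 1 \<and> m_opt N / 2 powr ((real N - 1)/2) = s * sin d ^ N + cos d ^ (N+1)"
proof -
  have hd0: "(real N + 1) * d = pi/4" unfolding d_def by (simp add: field_simps)
  then have hd: "pi = 4 * (real N + 1) * d" by (simp add: algebra_simps)
  have hN: "real N = 8 * real k + 2" unfolding N_def by simp
  have hdk2: "pi = 4 * (8 * real k + 2 + 1) * d" using hd hN by simp
    have ev: "even N" unfolding N_def by simp
  have "N mod 8 = 2" unfolding N_def by presburger
  then have th: "theta_opt N = pi/2 + 2*d"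
    unfolding theta_opt_def t_opt_def d_def by (simp add: field_simps)
  have Nd: "real N * d = pi/4 - d" using hd by (simp add: algebra_simps)
  have "m_opt N / 2 powr ((real N - 1)/2) = cos (pi/2 + d) ^ N * sin (pi - d) + cos d ^ N * sin (pi/2 - d)"
    by (rule gen[OF th, where ma=k and mb=k]) (simp_all add: hN hdk2 field_simps)
  also have "\<dots> = sin d * sin d ^ N + cos d ^ (N+1)"
    using ev by (simp add: sin_add cos_add sin_diff cos_diff power_minus_even)
  finally show ?thesis by (intro exI[of _ "sin d"]) simp
qed

lemma case2:
  fixes k :: nat
  defines "N \<equiv> 8*k+4"
  defines "d \<equiv> pi/(4*(real N+1))"
  shows "\<exists>s. \<bar>s\<bar> \<le> 1 \<and> m_opt N / 2 powr ((real N - 1)/2) = s * sin d ^ N + cos d ^ (N+1)"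
proof -
  have hd0: "(real N + 1) * d = pi/4" unfolding d_def by (simp add: field_simps)
  then have hd: "pi = 4 * (real N + 1) * d" by (simp add: algebra_simps)
  have hN: "real N = 8 * real k + 4" unfolding N_def by simp
  have hdk2: "pi = 4 * (8 * real k + 4 + 1) * d" using hd hN by simp
    have ev: "even N" unfolding N_def by simp
  have "N mod 8 = 4" unfolding N_def by presburger
  then have th: "theta_opt N = pi/2 - 2*d"
    unfolding theta_opt_def t_opt_def d_def by (simp add: field_simps)
  have Nd: "real N * d = pi/4 - d" using hd by (simp add: algebra_simps)
  have "m_opt N / 2 powr ((real N - 1)/2) = cos (pi/2 - d) ^ N * sin (pi + d) + cos (-d) ^ N * sin (pi/2 + d)"
    by (rule gen[OF th, where ma=k and mb=k]) (simp_all add: hN hdk2 field_simps)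
  also have "\<dots> = (- sin d) * sin d ^ N + cos d ^ (N+1)"
    using ev by (simp add: sin_add cos_add sin_diff cos_diff power_minus_even)
  finally show ?thesis by (intro exI[of _ "- sin d"]) simp
qed

lemma case3:
  fixes k :: nat
  defines "N \<equiv> 8*k+6"
  defines "d \<equiv> pi/(4*(real N+1))"
  shows "\<exists>s. \<bar>s\<bar> \<le> 1 \<and> m_opt N / 2 powr ((real N - 1)/2) = s * sin d ^ N + cos d ^ (N+1)"
proof -
  have hd0: "(real N + 1) * d = pi/4" unfolding d_def by (simp add: field_simps)
  then have hd: "pi = 4 * (real N + 1) * d" by (simp add: algebra_simps)
  have hN: "real N = 8 * real k + 6" unfolding N_def by simp
  have hdk2: "pi = 4 * (8 * real k + 6 + 1) * d" using hd hN by simp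
    have ev: "even N" unfolding N_def by simp
  have "N mod 8 = 6" unfolding N_def by presburger
  then have th: "theta_opt N = 3*pi/2 - 2*d"
    unfolding theta_opt_def t_opt_def d_def by (simp add: field_simps)
  have Nd: "real N * d = pi/4 - d" using hd by (simp add: algebra_simps)
  have "m_opt N / 2 powr ((real N - 1)/2) = cos (pi - d) ^ N * sin (pi/2 + d) + cos (pi/2 - d) ^ N * sin d"
    by (rule gen[OF th, where ma="3*k+2" and mb="3*k+2"]) (simp_all add: hN hdk2 field_simps)
  also have "\<dots> = sin d * sin d ^ N + cos d ^ (N+1)"
    using ev by (simp add: sin_add cos_add sin_diff cos_diff power_minus_even)
  finally show ?thesis by (intro exI[of _ "sin d"]) simp
qed

lemma case0:
  fixes k :: nat
  defines "N \<equiv> 8*k"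
  defines "d \<equiv> pi/(4*(real N+1))"
  shows "\<exists>s. \<bar>s\<bar> \<le> 1 \<and> m_opt N / 2 powr ((real N - 1)/2) = s * sin d ^ N + cos d ^ (N+1)"
proof -
  have hd0: "(real N + 1) * d = pi/4" unfolding d_def by (simp add: field_simps)
  then have hd: "pi = 4 * (real N + 1) * d" by (simp add: algebra_simps)
  have hN: "real N = 8 * real k" unfolding N_def by simp
  have hdk2: "pi = 4 * (8 * real k + 1) * d" using hd hN by simp
    have ev: "even N" unfolding N_def by simp
  have "N mod 8 = 0" unfolding N_def by presburger
  then have th: "theta_opt N = 3*pi/2 + 2*d"
    unfolding theta_opt_def t_opt_def d_def by (simp add: field_simps)
  have Nd: "real N * d = pi/4 - d" using hd by (simp add: algebra_simps)
  have "m_opt N / 2 powr ((real N - 1)/2) = cos (pi + d) ^ N * sin (pi/2 - d) + cos (pi/2 + d) ^ N * sin (-d)"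
    by (rule gen[OF th, where ma="3*k" and mb="3*k"]) (simp_all add: hN hdk2 field_simps)
  also have "\<dots> = (- sin d) * sin d ^ N + cos d ^ (N+1)"
    using ev by (simp add: sin_add cos_add sin_diff cos_diff power_minus_even)
  finally show ?thesis by (intro exI[of _ "- sin d"]) simp
qed
lemma allcase:
  fixes n :: nat
  shows "\<exists>s. \<bar>s\<bar> \<le> 1 \<and> m_opt (2*n) / 2 powr ((real (2*n) - 1)/2)
     = s * sin (pi/(4*(real (2*n)+1))) ^ (2*n) + cos (pi/(4*(real (2*n)+1))) ^ (2*n+1)"
proof -
  obtain k where k: "n = 4*k + n mod 4" by (metis div_mod_decomp mult.commute)
  have "n mod 4 < 4" by simp
  then consider "n mod 4 = 0" | "n mod 4 = 1" | "n mod 4 = 2" | "n mod 4 = 3" by linarith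
  then show ?thesis
  proof cases
    case 1
    then have "2*n = 8*k" using k by linarith
    then show ?thesis using case0[of k] by simp
  next
    case 2
    then have "2*n = 8*k+2" using k by linarith
    then show ?thesis using case1[of k] by simp
  next
    case 3
    then have "2*n = 8*k+4" using k by linarith
    then show ?thesis using case2[of k] by simp
  next
    case 4
    then have "2*n = 8*k+6" using k by linarith
    then show ?thesis using case3[of k] by simp
  qed
qed

lemma cos_pow_lower:
  fixes d :: real and M :: nat
  assumes "0 \<le> d" "d \<le> pi/2"
  shows "1 - real M * d^2 \<le> cos d ^ M"
proof -
  have c0: "0 \<le> cos d" "cos d \<le> 1" using assms by (auto intro: cos_ge_zero)
  have "sin d \<le> d" using assms sin_x_le_x by blast
  moreover have "0 \<le> sin d" using assms by (auto intro: sin_ge_zero)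
  ultimately have s2: "sin d ^ 2 \<le> d ^ 2" by (simp add: power_mono)
  have "1 - real M * d^2 \<le> 1 + real M * (- (sin d ^ 2))"
    using s2 by (simp add: mult_left_mono)
  also have "\<dots> \<le> (1 + (- (sin d ^ 2))) ^ M"
    by (rule Bernoulli_inequality) (simp add: abs_square_le_1)
  also have "1 + (- (sin d ^ 2)) = cos d ^ 2" by (simp add: cos_squared_eq)
  also have "(cos d ^ 2) ^ M \<le> cos d ^ M"
  proof -
    have "cos d ^ 2 \<le> cos d" using c0 by (simp add: power2_eq_square mult_left_le)
    then show ?thesis using c0 by (simp add: power_mono)
  qed
  finally show ?thesis .
qed

theorem proposition6:
  shows "((\<lambda>n::nat. m_opt (2 * n) / 2 powr ((real (2 * n) - 1) / 2)) \<longlongrightarrow> 1) sequentially"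
proof (rule tendsto_sandwich)
  define d where "d n = pi/(4*(real (2*n)+1))" for n :: nat
  have dpos: "0 < d n" "d n \<le> pi/2" for n
    unfolding d_def by (auto simp: field_simps)
  have sb: "0 \<le> sin (d n)" "sin (d n) \<le> d n" "sin (d n) \<le> 1" for n
    using dpos[of n] by (auto intro: sin_ge_zero sin_x_le_x)
  have cb: "cos (d n) ^ M \<le> 1" for n M
    using dpos[of n] by (intro power_le_one) (auto intro: cos_ge_zero)
  have sN: "\<bar>s * sin (d n) ^ (2*n)\<bar> \<le> d n" if "\<bar>s\<bar> \<le> 1" "n \<ge> 1" for s n
  proof -
    have "\<bar>s * sin (d n) ^ (2*n)\<bar> \<le> sin (d n) ^ (2*n)"
      using that sb[of n] by (simp add: abs_mult mult_left_le_one_le)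
    also have "\<dots> \<le> sin (d n) ^ 1"
      using that sb[of n] by (intro power_decreasing) auto
    finally show ?thesis using sb[of n] by simp
  qed
  show "\<forall>\<^sub>F n in sequentially. 1 - real (2*n+1) * d n ^ 2 - d n \<le> m_opt (2 * n) / 2 powr ((real (2 * n) - 1) / 2)"
    using eventually_ge_at_top[of "1::nat"]
  proof eventually_elim
    case (elim n)
    obtain s where s: "\<bar>s\<bar> \<le> 1" "m_opt (2*n) / 2 powr ((real (2*n) - 1)/2) = s * sin (d n) ^ (2*n) + cos (d n) ^ (2*n+1)"
      using allcase[of n] unfolding d_def by blast
    have "1 - real (2*n+1) * d n ^ 2 \<le> cos (d n) ^ (2*n+1)"
      using dpos[of n] by (intro cos_pow_lower) auto
    moreover have "- d n \<le> s * sin (d n) ^ (2*n)" using sN[OF s(1) elim] by linarith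
    ultimately show ?case using s(2) by linarith
  qed
  show "\<forall>\<^sub>F n in sequentially. m_opt (2 * n) / 2 powr ((real (2 * n) - 1) / 2) \<le> 1 + d n"
    using eventually_ge_at_top[of "1::nat"]
  proof eventually_elim
    case (elim n)
    obtain s where s: "\<bar>s\<bar> \<le> 1" "m_opt (2*n) / 2 powr ((real (2*n) - 1)/2) = s * sin (d n) ^ (2*n) + cos (d n) ^ (2*n+1)"
      using allcase[of n] unfolding d_def by blast
    have "s * sin (d n) ^ (2*n) \<le> d n" using sN[OF s(1) elim] by linarith
    then show ?case using s(2) cb[of n "2*n+1"] by linarith
  qed
  show "((\<lambda>n. 1 - real (2*n+1) * d n ^ 2 - d n) \<longlongrightarrow> 1) sequentially"
    unfolding d_def by real_asymp
  show "((\<lambda>n. 1 + d n) \<longlongrightarrow> 1) sequentially"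
    unfolding d_def by real_asymp
qed
end
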